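(* If $F:\mathbb{R}\to\mathbb{R}$ is a Darboux function whose set of points of continuity is uncountable, then there is a continuous, non-constant function $g:\mathbb{R}\to\mathbb{R}$ such that $F+g$ is Darboux.
   Context: A function $F:\mathbb{R}\to\mathbb{R}$ is Darboux if the image under $F$ of every interval is an interval. *)

theory Defs
  imports "HOL-Analysis.Analysis"
begin

text \<open>Intervals of the real line are exactly the sets satisfying is_interval
  (including empty and degenerate ones, which does not affect the notion).\<close>
definition darboux :: "(real \<Rightarrow> real) \<Rightarrow> bool" where
  "darboux F \<longleftrightarrow> (\<forall>I::real set. is_interval I \<longrightarrow> is_interval (F ` I))"

end

theory Submission
  imports Defs
begin
lemma open_loc:
  fixes P :: "real \<Rightarrow> bool"
  shows "open {z. \<exists>e>0. \<forall>w. dist w z < e \<longrightarrow> P w}"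
  unfolding open_dist
proof safe
  fix z e assume e: "(e::real) > 0" "\<forall>w. dist w z < e \<longrightarrow> P w"
  show "\<exists>d>0. \<forall>y. dist y z < d \<longrightarrow> y \<in> {z. \<exists>e>0. \<forall>w. dist w z < e \<longrightarrow> P w}"
  proof (intro exI[of _ e] conjI allI impI)
    fix y assume "dist y z < e"
    then show "y \<in> {z. \<exists>e>0. \<forall>w. dist w z < e \<longrightarrow> P w}"
      using e by (auto intro!: exI[of _ "e - dist y z"]) (metis dist_triangle add.commute less_diff_eq le_less_trans)
  qed (use e in auto)
qed

lemma darboux_core:
  fixes F g :: "real \<Rightarrow> real"
  assumes dF: "darboux F" and gc: "\<And>x. isCont g x"
    and loc: "\<And>x. isCont F x \<or> (\<exists>e>0. \<forall>w. dist w x < e \<longrightarrow> g w = g x)"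
    and st: "s \<le> t" and y: "min (F s + g s) (F t + g t) \<le> y" "y \<le> max (F s + g s) (F t + g t)"
  shows "\<exists>z\<in>{s..t}. F z + g z = y"
proof (rule ccontr)
  define h where "h = (\<lambda>x. F x + g x)"
  assume "\<not> ?thesis"
  then have ny: "\<And>z. z \<in> {s..t} \<Longrightarrow> h z \<noteq> y" unfolding h_def by auto
  define U where "U = {z. \<exists>e>0. \<forall>w. dist w z < e \<longrightarrow> (w \<in> {s..t} \<longrightarrow> h w < y)}"
  define V where "V = {z. \<exists>e>0. \<forall>w. dist w z < e \<longrightarrow> (w \<in> {s..t} \<longrightarrow> h w > y)}"
  have oU: "open U" unfolding U_def by (rule open_loc)
  have oV: "open V" unfolding V_def by (rule open_loc)
  have key: "z \<in> U \<or> z \<in> V" "h z < y \<Longrightarrow> z \<in> U" "h z > y \<Longrightarrow> z \<in> V" if z: "z \<in> {s..t}" for z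
  proof -
    have "(h z < y \<longrightarrow> z \<in> U) \<and> (h z > y \<longrightarrow> z \<in> V)"
    proof (cases "isCont F z")
      case True
      then have hc: "isCont h z" unfolding h_def using gc by (intro continuous_intros) auto
      show ?thesis
      proof (intro conjI impI)
        assume "h z < y"
        then obtain e where "e > 0" "\<forall>w. dist w z < e \<longrightarrow> dist (h w) (h z) < y - h z"
          using hc[unfolded continuous_at_eps_delta] by (meson diff_gt_0_iff_gt)
        then show "z \<in> U" unfolding U_def by (auto simp: dist_real_def abs_less_iff intro!: exI[of _ e])
      next
        assume "h z > y"
        then obtain e where "e > 0" "\<forall>w. dist w z < e \<longrightarrow> dist (h w) (h z) < h z - y"
          using hc[unfolded continuous_at_eps_delta] by (meson diff_gt_0_iff_gt)
        then show "z \<in> V" unfolding V_def by (auto simp: dist_real_def abs_less_iff intro!: exI[of _ e])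
      qed
    next
      case False
      then obtain e where e: "e > 0" "\<And>w. dist w z < e \<Longrightarrow> g w = g z" using loc by blast
      define J where "J = ball z e \<inter> {s..t}"
      have iJ: "is_interval J" unfolding J_def
        by (simp add: is_interval_convex_1 convex_Int)
      then have iFJ: "is_interval (F ` J)" using dF darboux_def by blast
      have zJ: "z \<in> J" using z e unfolding J_def by auto
      have hJ: "h w = F w + g z" if "w \<in> J" for w
      proof -
        have "dist w z < e" using that unfolding J_def by (simp add: dist_commute)
        then show ?thesis unfolding h_def using e(2)[of w] by simp
      qed
      have side: "\<And>w. w \<in> J \<Longrightarrow> (h z < y \<longleftrightarrow> h w < y)"
      proof -
        fix w assume wJ: "w \<in> J"
        have hw: "h w \<noteq> y" using ny wJ unfolding J_def by auto
        have hz: "h z \<noteq> y" using ny z by auto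
        show "(h z < y \<longleftrightarrow> h w < y)"
        proof (rule ccontr)
          assume "\<not> ?thesis"
          then have "min (F z) (F w) \<le> y - g z \<and> y - g z \<le> max (F z) (F w)"
            using hJ[OF wJ] hJ[OF zJ] hw hz by auto
          then have "y - g z \<in> F ` J" using iFJ[unfolded is_interval_1] zJ wJ
            by (metis imageI max_def min_def)
          then obtain w' where "w' \<in> J" "F w' = y - g z" by auto
          then have "h w' = y" using hJ by auto
          then show False using ny \<open>w' \<in> J\<close> unfolding J_def by auto
        qed
      qed
      have inJ: "w \<in> J" if "dist w z < e" "w \<in> {s..t}" for w
        using that unfolding J_def by (simp add: dist_commute)
      show ?thesis
      proof (intro conjI impI)
        assume hz: "h z < y"
        have "\<forall>w. dist w z < e \<longrightarrow> (w \<in> {s..t} \<longrightarrow> h w < y)"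
          using side[OF inJ] hz by blast
        then show "z \<in> U" unfolding U_def using e(1) by blast
      next
        assume hz: "h z > y"
        have "\<forall>w. dist w z < e \<longrightarrow> (w \<in> {s..t} \<longrightarrow> h w > y)"
        proof (intro allI impI)
          fix w assume "dist w z < e" "w \<in> {s..t}"
          then have "\<not> h w < y" "h w \<noteq> y" using side[OF inJ] hz ny by auto
          then show "h w > y" by linarith
        qed
        then show "z \<in> V" unfolding V_def using e(1) by blast
      qed
    qed
    then show "z \<in> U \<or> z \<in> V" "h z < y \<Longrightarrow> z \<in> U" "h z > y \<Longrightarrow> z \<in> V"
      using ny[OF z] by (auto simp: neq_iff)
  qed
  have disj: "U \<inter> V \<inter> {s..t} = {}"
  proof safe
    fix z assume "z \<in> U" "z \<in> V" "z \<in> {s..t}"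
    then obtain e1 e2 where "e1 > 0" "e2 > 0" "\<forall>w. dist w z < e1 \<longrightarrow> (w \<in> {s..t} \<longrightarrow> h w < y)"
       "\<forall>w. dist w z < e2 \<longrightarrow> (w \<in> {s..t} \<longrightarrow> h w > y)" unfolding U_def V_def by auto
    then show "z \<in> {}" using \<open>z \<in> {s..t}\<close> by force
  qed
  have cov: "{s..t} \<subseteq> U \<union> V" using key by blast
  have s: "s \<in> {s..t}" and t: "t \<in> {s..t}" using st by auto
  have "h s < y \<and> y < h t \<or> h t < y \<and> y < h s" using y ny[OF s] ny[OF t] unfolding h_def by auto
  then have "U \<inter> {s..t} \<noteq> {} \<and> V \<inter> {s..t} \<noteq> {}" using key[OF s] key[OF t] s t by blast
  moreover have "U \<inter> {s..t} = {} \<or> V \<inter> {s..t} = {}" by (rule connectedD[OF connected_Icc oU oV disj cov])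
  ultimately show False by simp
qed

lemma darboux_sum:
  fixes F g :: "real \<Rightarrow> real"
  assumes dF: "darboux F" and gc: "\<And>x. isCont g x"
    and loc: "\<And>x. isCont F x \<or> (\<exists>e>0. \<forall>w. dist w x < e \<longrightarrow> g w = g x)"
  shows "darboux (\<lambda>x. F x + g x)"
  unfolding darboux_def
proof (intro allI impI)
  fix I :: "real set" assume I: "is_interval I"
  show "is_interval ((\<lambda>x. F x + g x) ` I)"
    unfolding is_interval_1
  proof (intro ballI allI impI)
    fix u v y assume u: "u \<in> (\<lambda>x. F x + g x) ` I" and v: "v \<in> (\<lambda>x. F x + g x) ` I" and y: "u \<le> y \<and> y \<le> v"
    obtain s where s: "s \<in> I" "u = F s + g s" using u by blast
    obtain t where t: "t \<in> I" "v = F t + g t" using v by blast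
    have y1: "min (F s + g s) (F t + g t) \<le> y" "y \<le> max (F s + g s) (F t + g t)"
      using y s t by auto
    have y2: "min (F t + g t) (F s + g s) \<le> y" "y \<le> max (F t + g t) (F s + g s)"
      using y s t by auto
    show "y \<in> (\<lambda>x. F x + g x) ` I"
    proof (cases "s \<le> t")
      case True
      obtain z where z: "z \<in> {s..t}" "F z + g z = y"
        using darboux_core[OF dF gc loc True y1] by blast
      have "z \<in> I" by (rule mem_is_interval_1_I[OF I s(1) t(1)]) (use z in auto)
      moreover have "y = (\<lambda>x. F x + g x) z" using z(2) by simp
      ultimately show ?thesis by (intro image_eqI[of y "\<lambda>x. F x + g x" z])
    next
      case False
      then have ts: "t \<le> s" by simp
      obtain z where z: "z \<in> {t..s}" "F z + g z = y"
        using darboux_core[OF dF gc loc ts y2] by blast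
      have "z \<in> I" by (rule mem_is_interval_1_I[OF I t(1) s(1)]) (use z in auto)
      moreover have "y = (\<lambda>x. F x + g x) z" using z(2) by simp
      ultimately show ?thesis by (intro image_eqI[of y "\<lambda>x. F x + g x" z])
    qed
  qed
qed




lemma pow2_small:
  assumes "(e::real) > 0" shows "\<exists>n. 1 / 2 ^ n < e"
proof -
  obtain n where n: "inverse (real (Suc n)) < e" using reals_Archimedean[OF assms] by blast
  have "real (Suc n) < 2 ^ Suc n" using less_exp[of "Suc n"] by (metis of_nat_less_iff of_nat_numeral of_nat_power)
  then have "1 / 2 ^ Suc n < inverse (real (Suc n))"
    by (simp add: divide_simps)
  then show ?thesis using n by (intro exI[of _ "Suc n"]) linarith
qed

lemma down_closed_eq:
  fixes T :: "nat set"
  assumes fin: "finite T" and dc: "\<And>k j. k \<in> T \<Longrightarrow> j < k \<Longrightarrow> j \<in> T"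
  shows "T = {..<card T}"
proof (cases "T = {}")
  case True then show ?thesis by simp
next
  case False
  define m where "m = Max T"
  have mT: "m \<in> T" using fin False unfolding m_def by simp
  have "T = {..m}"
  proof
    show "T \<subseteq> {..m}" using fin unfolding m_def by auto
    show "{..m} \<subseteq> T"
    proof
      fix j assume "j \<in> {..m}"
      then have "j = m \<or> j < m" by auto
      then show "j \<in> T" using mT dc by blast
    qed
  qed
  then show ?thesis by (simp add: lessThan_Suc_atMost)
qed

primrec lev :: "(nat \<Rightarrow> real \<times> real \<Rightarrow> bool \<Rightarrow> real \<times> real) \<Rightarrow> real \<times> real \<Rightarrow> nat \<Rightarrow> nat \<Rightarrow> real \<times> real" where
  "lev sp r 0 k = r"
| "lev sp r (Suc n) k = sp n (lev sp r n (k div 2)) (odd k)"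

locale ctree =
  fixes F :: "real \<Rightarrow> real" and gd :: "real \<times> real \<Rightarrow> bool"
    and sp :: "nat \<Rightarrow> real \<times> real \<Rightarrow> bool \<Rightarrow> real \<times> real" and r :: "real \<times> real"
  assumes gd_r: "gd r"
    and gd_sp: "\<And>I n c. gd I \<Longrightarrow> gd (sp n I c)"
    and gd_lt: "\<And>I. gd I \<Longrightarrow> fst I < snd I"
    and sp_in: "\<And>I n c. gd I \<Longrightarrow> fst I < fst (sp n I c) \<and> snd (sp n I c) < snd I"
    and sp_ord: "\<And>I n. gd I \<Longrightarrow> snd (sp n I False) < fst (sp n I True)"
    and sp_osc: "\<And>I n c y z. gd I \<Longrightarrow> y \<in> {fst (sp n I c)..snd (sp n I c)} \<Longrightarrow>
        z \<in> {fst (sp n I c)..snd (sp n I c)} \<Longrightarrow> \<bar>F y - F z\<bar> \<le> 1 / real (Suc n)"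
begin

definition A where "A n k = fst (lev sp r n k)"
definition B where "B n k = snd (lev sp r n k)"

lemma gd_lev: "gd (lev sp r n k)"
  by (induction n arbitrary: k) (simp_all add: gd_r gd_sp)

lemma AB: "A n k < B n k" using gd_lt[OF gd_lev] unfolding A_def B_def .

lemma A_Suc: "A n (k div 2) < A (Suc n) k"
  using sp_in[OF gd_lev[of n "k div 2"], of n "odd k"] unfolding A_def B_def by simp

lemma B_Suc: "B (Suc n) k < B n (k div 2)"
  using sp_in[OF gd_lev[of n "k div 2"], of n "odd k"] unfolding A_def B_def by simp

lemma osc:
  assumes y: "y \<in> {A (Suc n) k..B (Suc n) k}" and z: "z \<in> {A (Suc n) k..B (Suc n) k}"
  shows "\<bar>F y - F z\<bar> \<le> 1 / real (Suc n)"
proof -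
  have e: "A (Suc n) k = fst (sp n (lev sp r n (k div 2)) (odd k))" "B (Suc n) k = snd (sp n (lev sp r n (k div 2)) (odd k))"
    by (simp_all add: A_def B_def)
  show ?thesis by (rule sp_osc[OF gd_lev]) (use y z e in simp_all)
qed

lemma ord: "k1 < k2 \<Longrightarrow> k2 < 2^n \<Longrightarrow> B n k1 < A n k2"
proof (induction n arbitrary: k1 k2)
  case 0 then show ?case by simp
next
  case (Suc n)
  show ?case
  proof (cases "k1 div 2 = k2 div 2")
    case True
    then have ev: "\<not> odd k1" "odd k2" using Suc.prems(1) by presburger+
    have "B (Suc n) k1 = snd (sp n (lev sp r n (k2 div 2)) False)"
      unfolding B_def using True ev by simp
    moreover have "A (Suc n) k2 = fst (sp n (lev sp r n (k2 div 2)) True)"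
      unfolding A_def using ev by simp
    ultimately show ?thesis using sp_ord[OF gd_lev] by simp
  next
    case False
    have "k1 div 2 \<le> k2 div 2" using Suc.prems(1) by (simp add: div_le_mono)
    then have lt: "k1 div 2 < k2 div 2" using False by simp
    have "k2 div 2 < 2^n" using Suc.prems(2) by simp
    then have "B n (k1 div 2) < A n (k2 div 2)" using Suc.IH lt by blast
    then show ?thesis using B_Suc[of n k1] A_Suc[of n k2] by linarith
  qed
qed

lemma root_bounds: "fst r \<le> A n k \<and> B n k \<le> snd r"
proof (induction n arbitrary: k)
  case 0 then show ?case by (simp add: A_def B_def)
next
  case (Suc n)
  then show ?case using A_Suc[of n k] B_Suc[of n k] Suc.IH[of "k div 2"] by linarith
qed

lemma nest: "n \<le> m \<Longrightarrow> \<forall>k<2^m. \<exists>j<2^n. A n j \<le> A m k \<and> B m k \<le> B n j"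
proof (induction m rule: dec_induct)
  case base then show ?case by blast
next
  case (step m)
  show ?case
  proof (intro allI impI)
    fix k :: nat assume k: "k < 2 ^ Suc m"
    then have "k div 2 < 2^m" by simp
    then obtain j where j: "j < 2^n" "A n j \<le> A m (k div 2)" "B m (k div 2) \<le> B n j" using step.IH by blast
    then show "\<exists>j<2^n. A n j \<le> A (Suc m) k \<and> B (Suc m) k \<le> B n j"
      using A_Suc[of m k] B_Suc[of m k] by (intro exI[of _ j]) auto
  qed
qed

definition S where "S n x = {k. k < 2^n \<and> B n k \<le> x}"
definition N where "N n x = card (S n x)"
definition G where "G n x = real (N n x) / 2^n"
definition g where "g x = (SUP n. G n x)"

lemma S_sub: "S n x \<subseteq> {..<2^n}" unfolding S_def by auto

lemma S_fin: "finite (S n x)" using S_sub finite_subset by blast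

lemma N_le: "N n x \<le> 2^n"
proof -
  have "card (S n x) \<le> card {..<(2::nat)^n}" by (rule card_mono[OF _ S_sub]) simp
  then show ?thesis unfolding N_def by simp
qed

lemma S_eq: "S n x = {..<N n x}"
  unfolding N_def
proof (rule down_closed_eq[OF S_fin])
  fix k j assume k: "k \<in> S n x" and j: "j < k"
  then have "k < 2^n" "B n k \<le> x" unfolding S_def by auto
  moreover have "B n j < A n k" using ord[OF j] \<open>k < 2^n\<close> by blast
  ultimately show "j \<in> S n x" unfolding S_def using j AB[of n k] by auto
qed

lemma mem_S: "k < 2^n \<Longrightarrow> B n k \<le> x \<longleftrightarrow> k < N n x"
proof -
  assume "k < 2^n"
  then have "B n k \<le> x \<longleftrightarrow> k \<in> S n x" unfolding S_def by simp
  also have "\<dots> \<longleftrightarrow> k < N n x" by (subst S_eq) simp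
  finally show ?thesis .
qed

lemma N_mono: "x \<le> y \<Longrightarrow> N n x \<le> N n y"
  unfolding N_def by (rule card_mono[OF S_fin]) (auto simp: S_def)

lemma N_Suc_lower: "2 * N n x \<le> N (Suc n) x"
proof -
  have "{..<2 * N n x} \<subseteq> S (Suc n) x"
  proof
    fix k assume "k \<in> {..<2 * N n x}"
    then have k: "k < 2 * N n x" by simp
    then have p: "k div 2 < N n x" by simp
    have k2: "k < 2 ^ Suc n" using k N_le[of n x] by simp
    have "k div 2 < 2^n" using p N_le[of n x] by simp
    then have "B n (k div 2) \<le> x" using mem_S p by blast
    then have "B (Suc n) k \<le> x" using B_Suc[of n k] by simp
    then show "k \<in> S (Suc n) x" unfolding S_def using k2 by simp
  qed
  then have "card {..<2 * N n x} \<le> card (S (Suc n) x)" by (rule card_mono[OF S_fin])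
  then show ?thesis unfolding N_def[of "Suc n"] by simp
qed

lemma N_Suc_upper: "N (Suc n) x \<le> 2 * N n x + 2"
proof -
  have "S (Suc n) x \<subseteq> {..<2 * N n x + 2}"
  proof
    fix k assume kS: "k \<in> S (Suc n) x"
    then have k2: "k < 2 ^ Suc n" and Bk: "B (Suc n) k \<le> x" unfolding S_def by auto
    show "k \<in> {..<2 * N n x + 2}"
    proof (rule ccontr)
      assume "k \<notin> {..<2 * N n x + 2}"
      then have p: "N n x < k div 2" by auto
      have p2: "k div 2 < 2^n" using k2 by simp
      then have N2: "N n x < 2^n" using p by simp
      have "\<not> B n (N n x) \<le> x" using mem_S[OF N2] by simp
      moreover have "B n (N n x) < A n (k div 2)" using ord[OF p p2] .
      ultimately show False using A_Suc[of n k] AB[of "Suc n" k] Bk by linarith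
    qed
  qed
  then have "card (S (Suc n) x) \<le> card {..<2 * N n x + 2}" by (rule card_mono[rotated]) simp
  then show ?thesis unfolding N_def[of "Suc n"] by simp
qed

lemma G_ge0: "0 \<le> G n x" unfolding G_def by simp

lemma G_le1: "G n x \<le> 1" unfolding G_def using N_le[of n x]
  by (simp add: divide_simps)

lemma G_Suc_lower: "G n x \<le> G (Suc n) x"
proof -
  have "real (2 * N n x) \<le> real (N (Suc n) x)" using N_Suc_lower[of n x] by (simp only: of_nat_le_iff)
  then show ?thesis unfolding G_def by (simp add: divide_simps)
qed

lemma G_Suc_upper: "G (Suc n) x \<le> G n x + 1 / 2^n"
proof -
  have "real (N (Suc n) x) \<le> real (2 * N n x + 2)" using N_Suc_upper[of n x] by (simp only: of_nat_le_iff)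
  then have "real (N (Suc n) x) \<le> 2 * real (N n x) + 2" by simp
  then show ?thesis unfolding G_def by (simp add: divide_simps)
qed

lemma G_mono: "n \<le> m \<Longrightarrow> G n x \<le> G m x"
proof (induction m rule: dec_induct)
  case base then show ?case by simp
next
  case (step m) then show ?case using G_Suc_lower[of m x] by linarith
qed

lemma G_upper: "n \<le> m \<Longrightarrow> G m x \<le> G n x + 2 / 2^n - 2 / 2^m"
proof (induction m rule: dec_induct)
  case base then show ?case by simp
next
  case (step m)
  have "2 / 2 ^ Suc m = (1::real) / 2^m" by simp
  then show ?case using G_Suc_upper[of m x] step.IH by linarith
qed

lemma g_lower: "G n x \<le> g x"
  unfolding g_def by (rule cSUP_upper) (auto intro!: bdd_aboveI[of _ 1] simp: G_le1)

lemma g_upper: "g x \<le> G n x + 2 / 2^n"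
  unfolding g_def
proof (rule cSUP_least)
  fix m
  show "G m x \<le> G n x + 2 / 2 ^ n"
  proof (cases "m \<le> n")
    case True
    then show ?thesis using G_mono[OF True, of x] by (simp add: add_increasing2)
  next
    case False
    then have "n \<le> m" by simp
    moreover have "(0::real) \<le> 2 / 2^m" by simp
    ultimately show ?thesis using G_upper[of n m x] by linarith
  qed
qed simp

lemma g_left: "x < fst r \<Longrightarrow> g x = 0"
proof -
  assume x: "x < fst r"
  have "S n x = {}" for n
  proof -
    have False if "k \<in> S n x" for k
    proof -
      have "B n k \<le> x" using that unfolding S_def by simp
      then show False using root_bounds[of n k] AB[of n k] x by linarith
    qed
    then show ?thesis by blast
  qed
  then have "G n x = 0" for n unfolding G_def N_def by simp
  then show ?thesis unfolding g_def by simp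
qed

lemma g_right: "snd r \<le> x \<Longrightarrow> g x = 1"
proof -
  assume x: "snd r \<le> x"
  have "S n x = {..<2^n}" for n
  proof
    show "S n x \<subseteq> {..<2^n}" by (rule S_sub)
    show "{..<2^n} \<subseteq> S n x"
    proof
      fix k assume "k \<in> {..<(2::nat)^n}"
      moreover have "B n k \<le> x" using root_bounds[of n k] x by linarith
      ultimately show "k \<in> S n x" unfolding S_def by simp
    qed
  qed
  then have "G n x = 1" for n unfolding G_def N_def by simp
  then show ?thesis unfolding g_def by simp
qed


lemma N_near:
  assumes xy: "x \<le> y" and small: "\<forall>k<2^n. y - x < B n k - A n k"
  shows "N n y \<le> N n x + 1"
proof (rule ccontr)
  assume "\<not> ?thesis"
  then have big: "N n x + 2 \<le> N n y" by simp
  define k1 where "k1 = N n x"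
  define k2 where "k2 = Suc (N n x)"
  have k2n: "k2 < 2^n" using big N_le[of n y] unfolding k2_def by simp
  have k1n: "k1 < 2^n" using k2n unfolding k1_def k2_def by simp
  have "k2 < N n y" using big unfolding k2_def by simp
  then have B2: "B n k2 \<le> y" using mem_S[OF k2n] by simp
  have B1: "\<not> B n k1 \<le> x" using mem_S[OF k1n] unfolding k1_def by simp
  have "B n k1 < A n k2" using ord[of k1 k2 n] k2n unfolding k1_def k2_def by simp
  then have "B n k2 - A n k2 < y - x" using B1 B2 by linarith
  then show False using small k2n by force
qed

lemma g_cont: "isCont g x"
  unfolding continuous_at_eps_delta
proof (intro allI impI)
  fix e :: real assume e: "e > 0"
  obtain n where n: "1 / 2 ^ n < e / 3" using pow2_small[of "e/3"] e by auto
  define l where "l = Min ((\<lambda>k. B n k - A n k) ` {..<2^n})"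
  have ne: "{..<(2::nat)^n} \<noteq> {}" by (simp add: lessThan_empty_iff)
  have lpos: "l > 0" unfolding l_def using AB ne by (subst Min_gr_iff) auto
  have lle: "l \<le> B n k - A n k" if "k < 2^n" for k unfolding l_def using that by (intro Min_le) auto
  show "\<exists>d>0. \<forall>x'. dist x' x < d \<longrightarrow> dist (g x') (g x) < e"
  proof (intro exI[of _ l] conjI allI impI lpos)
    fix y assume "dist y x < l"
    then have d: "\<bar>y - x\<bar> < l" by (simp add: dist_real_def)
    then have dd: "y - x < l" "x - y < l" by (simp_all add: abs_less_iff)
    have near: "\<bar>real (N n y) - real (N n x)\<bar> \<le> 1"
    proof (cases "x \<le> y")
      case True
      have "\<forall>k<2^n. y - x < B n k - A n k" using lle dd(1) by (meson order_less_le_trans)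
      from N_near[OF True this] N_mono[OF True, of n] show ?thesis by linarith
    next
      case False
      then have yx: "y \<le> x" by simp
      have "\<forall>k<2^n. x - y < B n k - A n k" using lle dd(2) by (meson order_less_le_trans)
      from N_near[OF yx this] N_mono[OF yx, of n] show ?thesis by linarith
    qed
    have "\<bar>G n y - G n x\<bar> = \<bar>real (N n y) - real (N n x)\<bar> / 2^n"
      unfolding G_def by (simp add: diff_divide_distrib[symmetric])
    also have "\<dots> \<le> 1 / 2^n" using near by (simp add: divide_right_mono)
    finally have "\<bar>G n y - G n x\<bar> \<le> 1 / 2^n" .
    moreover have "G n y \<le> g y" "g y \<le> G n y + 2 / 2^n" "G n x \<le> g x" "g x \<le> G n x + 2 / 2^n"
      using g_lower g_upper by blast+
    moreover have "2 / 2^n = 2 * (1 / (2::real)^n)" by simp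
    ultimately show "dist (g y) (g x) < e" using n unfolding dist_real_def by linarith
  qed
qed

definition K where "K = {x. \<forall>n. \<exists>k<2^n. A n k \<le> x \<and> x \<le> B n k}"

lemma g_locconst:
  assumes xK: "x \<notin> K"
  shows "\<exists>e>0. \<forall>w. dist w x < e \<longrightarrow> g w = g x"
proof -
  obtain n where n: "\<forall>k<2^n. \<not> (A n k \<le> x \<and> x \<le> B n k)" using xK unfolding K_def by blast
  define L where "L = (\<Union>k\<in>{..<(2::nat)^n}. {A n k..B n k})"
  have "closed L" unfolding L_def by (intro closed_UN) auto
  moreover have "x \<notin> L" unfolding L_def using n by auto
  ultimately obtain e where e: "e > 0" "ball x e \<subseteq> - L"
    using open_contains_ball[of "- L"] by (metis Compl_iff open_Compl)
  show ?thesis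
  proof (intro exI[of _ e] conjI allI impI e(1))
    fix w assume w: "dist w x < e"
    have SS: "S m w = S m x" if m: "n \<le> m" for m
    proof -
      have "B m k \<le> w \<longleftrightarrow> B m k \<le> x" if k: "k < 2^m" for k
      proof -
        obtain j where j: "j < 2^n" "A n j \<le> A m k" "B m k \<le> B n j" using nest[OF m] k by blast
        have "B m k \<in> L" unfolding L_def using j AB[of m k] by (intro UN_I[of j]) auto
        then have "B m k \<notin> ball x e" using e(2) by blast
        then have "e \<le> \<bar>x - B m k\<bar>" by (simp add: dist_real_def)
        moreover have "\<bar>w - x\<bar> < e" using w by (simp add: dist_real_def)
        ultimately show ?thesis by linarith
      qed
      then show ?thesis unfolding S_def by blast
    qed
    have bnd: "\<bar>g w - g x\<bar> \<le> 2 / 2^m" if m: "n \<le> m" for m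
    proof -
      have "G m w = G m x" unfolding G_def N_def using SS[OF m] by simp
      moreover have "G m w \<le> g w" "g w \<le> G m w + 2 / 2^m" "G m x \<le> g x" "g x \<le> G m x + 2 / 2^m"
        using g_lower g_upper by blast+
      ultimately show ?thesis by linarith
    qed
    show "g w = g x"
    proof (rule ccontr)
      assume "g w \<noteq> g x"
      then have "\<bar>g w - g x\<bar> / 2 > 0" by simp
      then obtain m0 where m0: "1 / 2 ^ m0 < \<bar>g w - g x\<bar> / 2" using pow2_small by blast
      define m where "m = max m0 n"
      have "(2::real) ^ m0 \<le> 2 ^ m" unfolding m_def by (intro power_increasing) auto
      then have 1: "1 / (2::real) ^ m \<le> 1 / 2 ^ m0" by (intro divide_left_mono) auto
      have 2: "\<bar>g w - g x\<bar> \<le> 2 / 2^m" using bnd[of m] unfolding m_def by simp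
      define a where "a = 1 / (2::real)^m"
      define b where "b = 1 / (2::real)^m0"
      define D where "D = \<bar>g w - g x\<bar>"
      have "a \<le> b" using 1 unfolding a_def b_def .
      moreover have "D \<le> 2 * a" using 2 unfolding D_def a_def by simp
      moreover have "b < D / 2" using m0 unfolding b_def D_def .
      ultimately show False by linarith
    qed
  qed
qed

lemma K_cont:
  assumes xK: "x \<in> K"
  shows "isCont F x"
  unfolding continuous_at_eps_delta
proof (intro allI impI)
  fix e :: real assume e: "e > 0"
  obtain n where n: "inverse (real (Suc n)) < e" using reals_Archimedean[OF e] by blast
  obtain k where k: "k < 2 ^ Suc (Suc n)" "A (Suc (Suc n)) k \<le> x" "x \<le> B (Suc (Suc n)) k"
    using xK unfolding K_def by blast
  define p where "p = k div 2"
  have a: "A (Suc n) p < x" using A_Suc[of "Suc n" k] k unfolding p_def by linarith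
  have b: "x < B (Suc n) p" using B_Suc[of "Suc n" k] k unfolding p_def by linarith
  define d where "d = min (x - A (Suc n) p) (B (Suc n) p - x)"
  have dpos: "d > 0" using a b unfolding d_def by simp
  show "\<exists>d>0. \<forall>x'. dist x' x < d \<longrightarrow> dist (F x') (F x) < e"
  proof (intro exI[of _ d] conjI allI impI dpos)
    fix w assume "dist w x < d"
    then have "\<bar>w - x\<bar> < d" by (simp add: dist_real_def)
    then have wI: "w \<in> {A (Suc n) p..B (Suc n) p}" unfolding d_def by (auto simp: abs_less_iff)
    have xI: "x \<in> {A (Suc n) p..B (Suc n) p}" using a b by simp
    have "\<bar>F w - F x\<bar> \<le> 1 / real (Suc n)" by (rule osc[OF wI xI])
    then show "dist (F w) (F x) < e" using n by (simp add: dist_real_def inverse_eq_divide)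
  qed
qed

end

lemma condensation:
  fixes C :: "real set"
  assumes unc: "uncountable C"
  shows "\<exists>D \<subseteq> C. D \<noteq> {} \<and> (\<forall>x\<in>D. \<forall>e>0. \<exists>y\<in>D. y \<noteq> x \<and> dist y x < e)"
proof -
  define D where "D = {x\<in>C. \<forall>e>0. uncountable (C \<inter> ball x e)}"
  define Q where "Q = {pq \<in> \<rat> \<times> \<rat>. countable (C \<inter> {fst pq<..<snd pq})}"
  have cQ: "countable Q"
  proof -
    have "countable (\<rat> \<times> (\<rat>::real set))" by (simp add: countable_rat)
    moreover have "Q \<subseteq> \<rat> \<times> \<rat>" unfolding Q_def by blast
    ultimately show ?thesis by (rule countable_subset[rotated])
  qed
  have sub: "C - D \<subseteq> (\<Union>pq\<in>Q. C \<inter> {fst pq<..<snd pq})"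
  proof
    fix x assume x: "x \<in> C - D"
    then obtain e where e: "e > 0" "countable (C \<inter> ball x e)" unfolding D_def by blast
    obtain p where p: "p \<in> \<rat>" "x - e < p" "p < x" using Rats_dense_in_real[of "x - e" x] e by auto
    obtain q where q: "q \<in> \<rat>" "x < q" "q < x + e" using Rats_dense_in_real[of x "x + e"] e by auto
    have "{p<..<q} \<subseteq> ball x e" using p q by (auto simp: dist_real_def)
    then have "countable (C \<inter> {p<..<q})" using e(2) by (meson countable_subset inf_mono order_refl)
    then have "(p, q) \<in> Q" unfolding Q_def using p q by auto
    moreover have "x \<in> C \<inter> {p<..<q}" using x p q by auto
    ultimately show "x \<in> (\<Union>pq\<in>Q. C \<inter> {fst pq<..<snd pq})" by force
  qed
  have cCD: "countable (C - D)"
  proof (rule countable_subset[OF sub])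
    show "countable (\<Union>pq\<in>Q. C \<inter> {fst pq<..<snd pq})"
      by (rule countable_UN[OF cQ]) (simp add: Q_def)
  qed
  have "D \<noteq> {}"
  proof
    assume "D = {}"
    then have "C - D = C" by simp
    then show False using cCD unc by simp
  qed
  moreover have "\<forall>x\<in>D. \<forall>e>0. \<exists>y\<in>D. y \<noteq> x \<and> dist y x < e"
  proof (intro ballI allI impI)
    fix x e assume x: "x \<in> D" and e: "(e::real) > 0"
    have u: "uncountable (C \<inter> ball x e)" using x e unfolding D_def by blast
    have "uncountable ((C \<inter> ball x e) - ((C - D) \<union> {x}))"
    proof
      assume "countable ((C \<inter> ball x e) - ((C - D) \<union> {x}))"
      moreover have "countable ((C - D) \<union> {x})" using cCD by simp
      ultimately have "countable (((C \<inter> ball x e) - ((C - D) \<union> {x})) \<union> ((C - D) \<union> {x}))"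
        by (rule countable_Un)
      moreover have "C \<inter> ball x e \<subseteq> ((C \<inter> ball x e) - ((C - D) \<union> {x})) \<union> ((C - D) \<union> {x})" by blast
      ultimately show False using u countable_subset by blast
    qed
    then obtain y where "y \<in> (C \<inter> ball x e) - ((C - D) \<union> {x})"
      by (metis countable_empty ex_in_conv)
    then show "\<exists>y\<in>D. y \<noteq> x \<and> dist y x < e" by (auto simp: dist_commute)
  qed
  moreover have "D \<subseteq> C" unfolding D_def by blast
  ultimately show ?thesis by blast
qed

lemma split_step:
  fixes F :: "real \<Rightarrow> real"
  assumes DC: "\<And>x. x \<in> D \<Longrightarrow> isCont F x"
    and Dd: "\<forall>x\<in>D. \<forall>e>0. \<exists>y\<in>D. y \<noteq> x \<and> dist y x < e"
    and d: "a < d" "d < b" "d \<in> D" and ep: "\<epsilon> > 0"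
  shows "\<exists>a0 b0 a1 b1. a < a0 \<and> a0 < b0 \<and> b0 < a1 \<and> a1 < b1 \<and> b1 < b
     \<and> (\<exists>d\<in>D. a0 < d \<and> d < b0) \<and> (\<exists>d\<in>D. a1 < d \<and> d < b1)
     \<and> (\<forall>y\<in>{a0..b0}. \<forall>z\<in>{a0..b0}. \<bar>F y - F z\<bar> \<le> \<epsilon>)
     \<and> (\<forall>y\<in>{a1..b1}. \<forall>z\<in>{a1..b1}. \<bar>F y - F z\<bar> \<le> \<epsilon>)"
proof -
  have "min (d - a) (b - d) > 0" using d by simp
  then obtain y where y: "y \<in> D" "y \<noteq> d" "dist y d < min (d - a) (b - d)" using Dd d(3) by blast
  define p where "p = min d y"
  define q where "q = max d y"
  have pq: "a < p" "p < q" "q < b" "p \<in> D" "q \<in> D"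
    using y d unfolding p_def q_def by (auto simp: dist_real_def min_def max_def abs_if split: if_splits)
  have e2: "\<epsilon> / 2 > 0" using ep by simp
  obtain dp where dp: "dp > 0" "\<And>w. dist w p < dp \<Longrightarrow> dist (F w) (F p) < \<epsilon> / 2"
    using DC[OF pq(4)] e2 unfolding continuous_at_eps_delta by blast
  obtain dq where dq: "dq > 0" "\<And>w. dist w q < dq \<Longrightarrow> dist (F w) (F q) < \<epsilon> / 2"
    using DC[OF pq(5)] e2 unfolding continuous_at_eps_delta by blast
  define r where "r = min (min dp dq) (min ((q - p) / 3) (min (p - a) (b - q))) / 2"
  have r: "r > 0" "r < dp" "r < dq" "3 * r < q - p" "r < p - a" "r < b - q"
    using pq dp dq unfolding r_def by (auto simp: min_def)
  have osc: "\<forall>y\<in>{c - r..c + r}. \<forall>z\<in>{c - r..c + r}. \<bar>F y - F z\<bar> \<le> \<epsilon>"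
    if c: "\<And>w. dist w c < dc \<Longrightarrow> dist (F w) (F c) < \<epsilon> / 2" and rd: "r < dc" for c dc
  proof (intro ballI)
    fix y z assume yz: "y \<in> {c - r..c + r}" "z \<in> {c - r..c + r}"
    have "dist y c < dc" "dist z c < dc" using yz rd by (auto simp: dist_real_def)
    then have "dist (F y) (F c) < \<epsilon> / 2" "dist (F z) (F c) < \<epsilon> / 2" using c by blast+
    then show "\<bar>F y - F z\<bar> \<le> \<epsilon>" unfolding dist_real_def by arith
  qed
  show ?thesis
  proof (intro exI conjI)
    show "a < p - r" "p - r < p + r" "p + r < q - r" "q - r < q + r" "q + r < b" using r by auto
    show "\<exists>d\<in>D. p - r < d \<and> d < p + r" using pq(4) r(1) by (intro bexI[of _ p]) auto
    show "\<exists>d\<in>D. q - r < d \<and> d < q + r" using pq(5) r(1) by (intro bexI[of _ q]) auto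
    show "\<forall>y\<in>{p - r..p + r}. \<forall>z\<in>{p - r..p + r}. \<bar>F y - F z\<bar> \<le> \<epsilon>" by (rule osc[OF dp(2) r(2)])
    show "\<forall>y\<in>{q - r..q + r}. \<forall>z\<in>{q - r..q + r}. \<bar>F y - F z\<bar> \<le> \<epsilon>" by (rule osc[OF dq(2) r(3)])
  qed
qed



lemma (in ctree) exists_g:
  "\<exists>g::real \<Rightarrow> real. (\<forall>x. isCont g x) \<and> (\<exists>x y. g x \<noteq> g y) \<and> (\<forall>x. isCont F x \<or> (\<exists>e>0. \<forall>w. dist w x < e \<longrightarrow> g w = g x))"
proof -
  have 1: "\<forall>x. isCont g x" using g_cont by blast
  have "g (fst r - 1) = 0" by (rule g_left) simp
  moreover have "g (snd r) = 1" by (rule g_right) simp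
  ultimately have 2: "\<exists>x y. g x \<noteq> g y" by (intro exI[of _ "fst r - 1"] exI[of _ "snd r"]) simp
  have 3: "isCont F x \<or> (\<exists>e>0. \<forall>w. dist w x < e \<longrightarrow> g w = g x)" for x
  proof (cases "x \<in> K")
    case True then show ?thesis using K_cont by blast
  next
    case False then show ?thesis using g_locconst by blast
  qed
  show ?thesis using 1 2 3 by blast
qed

theorem mainTheorem7:
  fixes F :: "real \<Rightarrow> real"
  assumes "darboux F"
    and "uncountable {x. isCont F x}"
  shows "\<exists>g :: real \<Rightarrow> real. continuous_on UNIV g \<and> (\<exists>x y. g x \<noteq> g y)
           \<and> darboux (\<lambda>x. F x + g x)"
proof -
  obtain D where D: "D \<subseteq> {x. isCont F x}" "D \<noteq> {}" "\<forall>x\<in>D. \<forall>e>0. \<exists>y\<in>D. y \<noteq> x \<and> dist y x < e"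
    using condensation[OF assms(2)] by blast
  have DC: "\<And>x. x \<in> D \<Longrightarrow> isCont F x" using D(1) by blast
  obtain d0 where d0: "d0 \<in> D" using D(2) by blast
  define gd where "gd = (\<lambda>I::real\<times>real. fst I < snd I \<and> (\<exists>d\<in>D. fst I < d \<and> d < snd I))"
  define P where "P = (\<lambda>(n::nat) (I::real\<times>real) (J::bool \<Rightarrow> real\<times>real). gd I \<longrightarrow>
     (gd (J False) \<and> gd (J True) \<and> fst I < fst (J False) \<and> snd (J False) < snd I
      \<and> fst I < fst (J True) \<and> snd (J True) < snd I \<and> snd (J False) < fst (J True)
      \<and> (\<forall>c. \<forall>y\<in>{fst (J c)..snd (J c)}. \<forall>z\<in>{fst (J c)..snd (J c)}. \<bar>F y - F z\<bar> \<le> 1 / real (Suc n))))"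
  have ex: "\<exists>J. P n I J" for n I
  proof (cases "gd I")
    case False then show ?thesis unfolding P_def by simp
  next
    case True
    then obtain dd where dd: "dd \<in> D" "fst I < dd" "dd < snd I" unfolding gd_def by auto
    have "1 / real (Suc n) > 0" by simp
    from split_step[OF DC D(3) dd(2,3,1) this] obtain a0 b0 a1 b1 where
      s: "fst I < a0" "a0 < b0" "b0 < a1" "a1 < b1" "b1 < snd I"
       "\<exists>d\<in>D. a0 < d \<and> d < b0" "\<exists>d\<in>D. a1 < d \<and> d < b1"
       "\<forall>y\<in>{a0..b0}. \<forall>z\<in>{a0..b0}. \<bar>F y - F z\<bar> \<le> 1 / real (Suc n)"
       "\<forall>y\<in>{a1..b1}. \<forall>z\<in>{a1..b1}. \<bar>F y - F z\<bar> \<le> 1 / real (Suc n)"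
      by blast
    define J where "J = (\<lambda>c::bool. if c then (a1, b1) else (a0, b0))"
    have osc: "\<forall>c. \<forall>y\<in>{fst (J c)..snd (J c)}. \<forall>z\<in>{fst (J c)..snd (J c)}. \<bar>F y - F z\<bar> \<le> 1 / real (Suc n)"
    proof
      fix c show "\<forall>y\<in>{fst (J c)..snd (J c)}. \<forall>z\<in>{fst (J c)..snd (J c)}. \<bar>F y - F z\<bar> \<le> 1 / real (Suc n)"
        using s(8,9) unfolding J_def by (cases c) simp_all
    qed
    have "gd (J False)" "gd (J True)" using s unfolding gd_def J_def by simp_all
    then have "P n I J" unfolding P_def using s osc unfolding J_def by simp
    then show ?thesis by blast
  qed
  define sp where "sp = (\<lambda>n I. SOME J. P n I J)"
  have spP: "P n I (sp n I)" for n I unfolding sp_def by (rule someI_ex[OF ex])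
  define r where "r = (d0 - 1, d0 + 1)"
  have gr: "gd r" unfolding gd_def r_def using d0 by (auto intro!: bexI[of _ d0])
  have ct: "ctree F gd sp r"
  proof
    show "gd r" by (rule gr)
    fix I n c assume I: "gd I"
    have p: "gd (sp n I False) \<and> gd (sp n I True) \<and> fst I < fst (sp n I False) \<and> snd (sp n I False) < snd I
      \<and> fst I < fst (sp n I True) \<and> snd (sp n I True) < snd I \<and> snd (sp n I False) < fst (sp n I True)
      \<and> (\<forall>c. \<forall>y\<in>{fst (sp n I c)..snd (sp n I c)}. \<forall>z\<in>{fst (sp n I c)..snd (sp n I c)}. \<bar>F y - F z\<bar> \<le> 1 / real (Suc n))"
      using spP[of n I] I unfolding P_def by simp
    show "gd (sp n I c)" using p by (cases c) simp_all
    show "fst I < fst (sp n I c) \<and> snd (sp n I c) < snd I" using p by (cases c) simp_all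
    show "snd (sp n I False) < fst (sp n I True)" using p by simp
    show "\<bar>F y - F z\<bar> \<le> 1 / real (Suc n)" if "y \<in> {fst (sp n I c)..snd (sp n I c)}" "z \<in> {fst (sp n I c)..snd (sp n I c)}" for y z
      using p that by blast
  next
    fix I :: "real \<times> real" assume "gd I" then show "fst I < snd I" unfolding gd_def by simp
  qed
  obtain g :: "real \<Rightarrow> real" where g: "\<forall>x. isCont g x" "\<exists>x y. g x \<noteq> g y"
      "\<forall>x. isCont F x \<or> (\<exists>e>0. \<forall>w. dist w x < e \<longrightarrow> g w = g x)"
    using ctree.exists_g[OF ct] by blast
  have "continuous_on UNIV g" using g(1) by (simp add: continuous_at_imp_continuous_on)
  moreover have "darboux (\<lambda>x. F x + g x)"
    by (rule darboux_sum[OF assms(1)]) (use g in blast)+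
  ultimately show ?thesis using g(2) by blast
qed

end
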